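(* Let $p>1$ and $h\in C[0,\infty)$ with $h(s)>0$ for $s>0$. Suppose that the equation $w''+h(s)|w|^{p-1}w=0$ has two solutions $\underline{w},\overline{w}$ on $[0,\infty)$ with $\underline{w}(0)=\overline{w}(0)=0$, $0<\underline{w}'(0)<\overline{w}'(0)$, and $\underline{w}(s)>0$, $\overline{w}(s)>0$ for $s>0$. Assume moreover that this equation has a solution $w$ with $w(0)=0$, $\underline{w}'(0)<w'(0)<\overline{w}'(0)$, $w(s)>0$ for $0<s<s_0$ and $w(s_0)=0$ for some $s_0>0$. Then for all sufficiently large $c>0$ the problem \[ w''+h(s)|w|^{p-1}w=0\ (0<s<c),\quad w(0)=w(c)=0,\quad w(s)>0\ (0<s<c), \] has two solutions $w_1,w_2$ with $\underline{w}'(0)<w_1'(0)<w'(0)<w_2'(0)<\overline{w}'(0)$. *)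

theory Defs
  imports "HOL-Analysis.Analysis"
begin

definition nl :: "(real \<Rightarrow> real) \<Rightarrow> real \<Rightarrow> real \<Rightarrow> real \<Rightarrow> real" where
  "nl h p s x = h s * (\<bar>x\<bar> powr (p - 1) * x)"

definition ode_sol :: "(real \<Rightarrow> real) \<Rightarrow> real \<Rightarrow> real set \<Rightarrow> (real \<Rightarrow> real) \<Rightarrow> (real \<Rightarrow> real) \<Rightarrow> bool" where
  "ode_sol h p I w dw \<longleftrightarrow>
     (\<forall>s\<in>I. (w has_real_derivative dw s) (at s within I) \<and>
             (dw has_real_derivative (- nl h p s (w s))) (at s within I))"

end

theory Submission
  imports Defs
begin


lemma mvt_within:
  fixes f f' :: "real \<Rightarrow> real"
  assumes "a < b" "{a..b} \<subseteq> S"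
    and "\<And>x. x \<in> {a..b} \<Longrightarrow> (f has_real_derivative f' x) (at x within S)"
  shows "\<exists>x\<in>{a<..<b}. f b - f a = f' x * (b - a)"
proof -
  have "\<And>x. a \<le> x \<Longrightarrow> x \<le> b \<Longrightarrow> (f has_derivative (*) (f' x)) (at x within {a..b})"
    using assms(2,3) by (auto simp: has_field_derivative_def[symmetric] intro: DERIV_subset)
  from mvt_simple[of a b f "\<lambda>x. (*) (f' x)", OF assms(1) this] show ?thesis by auto
qed

lemma mono_within:
  fixes f f' :: "real \<Rightarrow> real"
  assumes "a \<le> b" "{a..b} \<subseteq> S"
    and "\<And>x. x \<in> {a..b} \<Longrightarrow> (f has_real_derivative f' x) (at x within S)"
    and "\<And>x. x \<in> {a..b} \<Longrightarrow> 0 \<le> f' x"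
  shows "f a \<le> f b"
proof (cases "a = b")
  case False
  then have "a < b" using assms(1) by simp
  from mvt_within[OF this assms(2,3)] obtain x where "x \<in> {a<..<b}" "f b - f a = f' x * (b - a)"
    by blast
  moreover have "0 \<le> f' x" using assms(4) \<open>x \<in> {a<..<b}\<close> by auto
  ultimately show ?thesis using \<open>a < b\<close>
    by (metis diff_ge_0_iff_ge less_eq_real_def mult_nonneg_nonneg)
qed simp

definition pw :: "real \<Rightarrow> real \<Rightarrow> real" where
  "pw p x = \<bar>x\<bar> powr (p - 1) * x"

lemma nl_pw: "nl h p s x = h s * pw p x"
  by (simp add: nl_def pw_def)

lemma pw_nonneg_eq: "0 \<le> x \<Longrightarrow> pw p x = x powr p"
proof (cases "x = 0")
  case False
  assume "0 \<le> x"
  then have "x > 0" using False by simp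
  then show ?thesis by (simp add: pw_def powr_diff)
qed (simp add: pw_def)

lemma pw_lip:
  assumes p: "1 < p" and "0 \<le> x" "x \<le> y" "y \<le> M"
  shows "0 \<le> pw p y - pw p x \<and> pw p y - pw p x \<le> p * M powr (p - 1) * (y - x)"
proof -
  have py: "pw p y = y powr p" and px: "pw p x = x powr p"
    using assms pw_nonneg_eq by auto
  have mono: "x powr p \<le> y powr p" using assms by (intro powr_mono2) auto
  have M0: "0 \<le> M" using assms by simp
  have "y powr p - x powr p \<le> p * M powr (p - 1) * (y - x)"
  proof (cases "x = 0")
    case True
    have "y powr p = y powr (p - 1) * y"
      using assms True by (cases "y = 0") (auto simp: powr_diff)
    also have "\<dots> \<le> M powr (p - 1) * y"
      using assms by (intro mult_right_mono powr_mono2) auto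
    also have "\<dots> \<le> p * M powr (p - 1) * y"
    proof -
      have "M powr (p - 1) \<le> p * M powr (p - 1)" using assms by (simp add: mult_le_cancel_right1)
      then show ?thesis using assms by (intro mult_right_mono) auto
    qed
    finally show ?thesis using True by simp
  next
    case False
    then have x0: "0 < x" using assms by simp
    show ?thesis
    proof (cases "x = y")
      case False
      then have "x < y" using assms by simp
      have "\<And>t. t \<in> {x..y} \<Longrightarrow> ((\<lambda>z. z powr p) has_real_derivative p * t powr (p - 1)) (at t within UNIV)"
        using x0 by (intro has_real_derivative_powr) auto
      from mvt_within[OF \<open>x < y\<close> _ this] obtain t where t: "t \<in> {x<..<y}"
        "y powr p - x powr p = p * t powr (p - 1) * (y - x)" by blast
      have "t powr (p - 1) \<le> M powr (p - 1)" using t assms x0 by (intro powr_mono2) auto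
      then show ?thesis using t(2) assms \<open>x < y\<close> by (simp add: mult_right_mono)
    qed simp
  qed
  then show ?thesis using py px mono by simp
qed



definition Ftr :: "real \<Rightarrow> real \<Rightarrow> real \<Rightarrow> real" where
  "Ftr p M x = pw p (max 0 (min M x))"

definition tsol :: "(real \<Rightarrow> real) \<Rightarrow> real \<Rightarrow> real \<Rightarrow> real \<Rightarrow> (real \<Rightarrow> real) \<Rightarrow> (real \<Rightarrow> real) \<Rightarrow> bool" where
  "tsol h p M d v dv \<longleftrightarrow> (\<forall>t\<in>{0..d}. (v has_real_derivative dv t) (at t within {0..d}) \<and>
      (dv has_real_derivative - (h t * Ftr p M (v t))) (at t within {0..d}))"

lemma Ftr_lip:
  assumes "1 < p" "0 < M"
  shows "\<bar>Ftr p M x - Ftr p M y\<bar> \<le> p * M powr (p - 1) * \<bar>x - y\<bar>"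
proof -
  define a where "a = max 0 (min M x)"
  define b where "b = max 0 (min M y)"
  have ab: "\<bar>a - b\<bar> \<le> \<bar>x - y\<bar>" unfolding a_def b_def by linarith
  have "\<bar>pw p a - pw p b\<bar> \<le> p * M powr (p - 1) * \<bar>a - b\<bar>"
  proof (cases "a \<le> b")
    case True
    have "0 \<le> a" "b \<le> M" using assms unfolding a_def b_def by auto
    from pw_lip[OF assms(1) this(1) True this(2)] True show ?thesis
      by (simp add: abs_if)
  next
    case False
    have "0 \<le> b" "a \<le> M" using assms unfolding a_def b_def by auto
    from pw_lip[OF assms(1) this(1) _ this(2)] False show ?thesis
      by (simp add: abs_if)
  qed
  also have "\<dots> \<le> p * M powr (p - 1) * \<bar>x - y\<bar>"
    using ab assms by (intro mult_left_mono) auto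
  finally show ?thesis unfolding Ftr_def a_def b_def .
qed

lemma Ftr_nonneg:
  assumes "1 < p" "0 < M"
  shows "0 \<le> Ftr p M x"
proof -
  have "0 \<le> pw p (max 0 (min M x)) - pw p 0"
    using pw_lip[OF assms(1), of 0 "max 0 (min M x)" M] assms by auto
  then show ?thesis by (simp add: Ftr_def pw_def)
qed

lemma Ftr_eq: "0 \<le> x \<Longrightarrow> x \<le> M \<Longrightarrow> Ftr p M x = pw p x"
  by (simp add: Ftr_def)

lemma Ftr_cont:
  assumes "1 < p" "0 < M"
  shows "continuous_on UNIV (Ftr p M)"
proof (rule lipschitz_on_continuous_on)
  show "(p * M powr (p - 1))-lipschitz_on UNIV (Ftr p M)"
    using Ftr_lip[OF assms] assms by (intro lipschitz_onI) (auto simp: dist_real_def)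
qed

lemma expint:
  fixes \<phi> :: "real \<Rightarrow> real"
  assumes "0 \<le> t" "0 < K" "0 \<le> A" "continuous_on {0..t} \<phi>"
    and "\<And>r. r \<in> {0..t} \<Longrightarrow> \<bar>\<phi> r\<bar> \<le> A * exp (K * r)"
  shows "\<bar>integral {0..t} \<phi>\<bar> \<le> A * exp (K * t) / K"
proof -
  have hint: "((\<lambda>r. A * exp (K * r)) has_integral (A * exp (K * t) / K - A * exp (K * 0) / K)) {0..t}"
  proof (rule fundamental_theorem_of_calculus[OF assms(1)])
    fix x assume "x \<in> {0..t}"
    have "((\<lambda>r. A * exp (K * r) / K) has_real_derivative A * exp (K * x)) (at x within {0..t})"
      using assms(2) by (auto intro!: derivative_eq_intros)
    then show "((\<lambda>r. A * exp (K * r) / K) has_vector_derivative A * exp (K * x)) (at x within {0..t})"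
      by (simp add: has_real_derivative_iff_has_vector_derivative)
  qed
  have i: "integral {0..t} (\<lambda>r. A * exp (K * r)) = A * exp (K * t) / K - A * exp (K * 0) / K"
    by (rule integral_unique[OF hint])
  have "norm (integral {0..t} \<phi>) \<le> integral {0..t} (\<lambda>r. A * exp (K * r))"
    using hint assms(4,5)
    by (intro integral_norm_bound_integral integrable_continuous_interval) (auto intro!: continuous_intros)
  moreover have "0 \<le> A / K" using assms by simp
  ultimately show ?thesis using i by simp
qed



lemma absmd: "0 \<le> (c::real) \<Longrightarrow> \<bar>c * x - c * y\<bar> = c * \<bar>x - y\<bar>"
  by (metis abs_mult abs_of_nonneg right_diff_distrib)

locale trunc =
  fixes h :: "real \<Rightarrow> real" and p M d H K :: real
  assumes p1: "1 < p" and M0: "0 < M" and d0: "0 < d" and H0: "0 < H" and K0: "0 < K"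
    and hc: "continuous_on {0..d} h"
    and hb: "\<And>s. s \<in> {0..d} \<Longrightarrow> 0 \<le> h s \<and> h s \<le> H"
    and KL: "2 * H * (p * M powr (p - 1)) \<le> K ^ 2"
begin

definition L where "L = p * M powr (p - 1)"
definition cd where "cd s = max 0 (min d s)"
definition ez :: "(real \<Rightarrow>\<^sub>C real) \<Rightarrow> real \<Rightarrow> real" where
  "ez z r = exp (K * r) * apply_bcontfun z r"
definition g where "g z r = h r * Ftr p M (ez z r)"
definition G where "G z r = integral {0..r} (g z)"
definition I where "I z t = integral {0..t} (G z)"
definition E where "E a z t = exp (- (K * t)) * (a * t - I z t)"

lemma L0: "0 \<le> L" using p1 M0 by (simp add: L_def)

lemma cd_in: "cd s \<in> {0..d}" using d0 by (auto simp: cd_def)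
lemma cd_id: "s \<in> {0..d} \<Longrightarrow> cd s = s" by (auto simp: cd_def)
lemma cd_cont: "continuous_on UNIV cd" unfolding cd_def[abs_def] by (intro continuous_intros)

lemma g_cont: "continuous_on {0..d} (g z)"
proof -
  have "continuous_on {0..d} (\<lambda>r. Ftr p M (ez z r))"
    by (rule continuous_on_compose2[OF Ftr_cont[OF p1 M0] _ subset_UNIV])
       (auto simp: ez_def intro!: continuous_intros)
  then show ?thesis unfolding g_def[abs_def] using hc by (intro continuous_intros)
qed

lemma G_eq: "G z = (\<lambda>r. integral {0..r} (g z))" by (rule ext) (simp add: G_def)
lemma I_eq: "I z = (\<lambda>r. integral {0..r} (G z))" by (rule ext) (simp add: I_def)

lemma G_deriv: "t \<in> {0..d} \<Longrightarrow> (G z has_real_derivative g z t) (at t within {0..d})"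
  unfolding G_eq has_real_derivative_iff_has_vector_derivative
  by (rule integral_has_vector_derivative[OF g_cont])

lemma G_cont: "continuous_on {0..d} (G z)"
  using G_deriv DERIV_continuous continuous_on_eq_continuous_within by blast

lemma I_deriv: "t \<in> {0..d} \<Longrightarrow> (I z has_real_derivative G z t) (at t within {0..d})"
  unfolding I_eq has_real_derivative_iff_has_vector_derivative
  by (rule integral_has_vector_derivative[OF G_cont])

lemma I_cont: "continuous_on {0..d} (I z)"
  using I_deriv DERIV_continuous continuous_on_eq_continuous_within by blast

lemma E_cont: "continuous_on {0..d} (E a z)"
  unfolding E_def[abs_def] using I_cont by (intro continuous_intros)

lemma bc_comp:
  fixes f :: "real \<Rightarrow> real"
  assumes "continuous_on {0..d} f"
  shows "(\<lambda>s. f (cd s)) \<in> bcontfun"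
proof -
  have c: "continuous_on UNIV (\<lambda>s. f (cd s))"
    by (rule continuous_on_compose2[OF assms cd_cont]) (use cd_in in blast)
  have "bounded (f ` {0..d})" by (intro compact_imp_bounded compact_continuous_image assms) simp
  then obtain B where B: "\<forall>x\<in>{0..d}. norm (f x) \<le> B" unfolding bounded_iff by auto
  then have "\<And>s. norm (f (cd s)) \<le> B" using cd_in by blast
  then show ?thesis by (rule bcontfun_normI[OF c])
qed

definition Phi where "Phi a z = Bcontfun (\<lambda>s. E a z (cd s))"

lemma Phi_apply: "apply_bcontfun (Phi a z) s = E a z (cd s)"
  unfolding Phi_def using bc_comp[OF E_cont] by (simp add: Bcontfun_inverse)

lemma g_diff:
  assumes "r \<in> {0..d}"
  shows "\<bar>g z1 r - g z2 r\<bar> \<le> H * L * dist z1 z2 * exp (K * r)"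
proof -
  have e1: "\<bar>g z1 r - g z2 r\<bar> = \<bar>h r\<bar> * \<bar>Ftr p M (ez z1 r) - Ftr p M (ez z2 r)\<bar>"
    by (simp add: g_def abs_mult[symmetric] right_diff_distrib)
  have e2: "\<bar>ez z1 r - ez z2 r\<bar> = exp (K * r) * \<bar>z1 r - z2 r\<bar>"
    unfolding ez_def by (rule absmd) simp
  have e3: "\<bar>z1 r - z2 r\<bar> \<le> dist z1 z2"
    using dist_bounded[of z1 r z2] by (simp add: dist_real_def)
  have e4: "\<bar>Ftr p M (ez z1 r) - Ftr p M (ez z2 r)\<bar> \<le> L * \<bar>ez z1 r - ez z2 r\<bar>"
    using Ftr_lip[OF p1 M0] unfolding L_def by blast
  have e5: "L * \<bar>ez z1 r - ez z2 r\<bar> \<le> L * (exp (K * r) * dist z1 z2)"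
    unfolding e2 using e3 L0 by (intro mult_left_mono) auto
  have "\<bar>g z1 r - g z2 r\<bar> \<le> H * (L * (exp (K * r) * dist z1 z2))"
    unfolding e1 using hb[OF assms] e4 e5 by (intro mult_mono) auto
  then show ?thesis by (simp add: mult_ac)
qed

lemma G_diff:
  assumes "t \<in> {0..d}"
  shows "\<bar>G z1 t - G z2 t\<bar> \<le> H * L * dist z1 z2 * exp (K * t) / K"
proof -
  have sub: "{0..t} \<subseteq> {0..d}" using assms by auto
  have "G z1 t - G z2 t = integral {0..t} (\<lambda>r. g z1 r - g z2 r)"
    unfolding G_def
    by (rule integral_diff[symmetric]; intro integrable_continuous_interval continuous_on_subset[OF g_cont sub])
  also have "\<bar>\<dots>\<bar> \<le> H * L * dist z1 z2 * exp (K * t) / K"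
    using assms H0 L0 K0 g_diff sub
    by (intro expint continuous_intros continuous_on_subset[OF g_cont sub]) auto
  finally show ?thesis .
qed

lemma I_diff:
  assumes "t \<in> {0..d}"
  shows "\<bar>I z1 t - I z2 t\<bar> \<le> H * L * dist z1 z2 / K * exp (K * t) / K"
proof -
  have sub: "{0..t} \<subseteq> {0..d}" using assms by auto
  have "I z1 t - I z2 t = integral {0..t} (\<lambda>r. G z1 r - G z2 r)"
    unfolding I_def
    by (rule integral_diff[symmetric]; intro integrable_continuous_interval continuous_on_subset[OF G_cont sub])
  also have "\<bar>\<dots>\<bar> \<le> H * L * dist z1 z2 / K * exp (K * t) / K"
  proof (rule expint)
    show "continuous_on {0..t} (\<lambda>r. G z1 r - G z2 r)"
      by (intro continuous_intros continuous_on_subset[OF G_cont sub])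
    fix r assume "r \<in> {0..t}"
    then show "\<bar>G z1 r - G z2 r\<bar> \<le> H * L * dist z1 z2 / K * exp (K * r)"
      using G_diff[of r z1 z2] sub by auto
  qed (use assms H0 L0 K0 in auto)
  finally show ?thesis .
qed

lemma E_diff:
  assumes "t \<in> {0..d}"
  shows "\<bar>E a z1 t - E a z2 t\<bar> \<le> dist z1 z2 / 2"
proof -
  have "\<bar>E a z1 t - E a z2 t\<bar> = exp (- (K * t)) * \<bar>(a * t - I z1 t) - (a * t - I z2 t)\<bar>"
    unfolding E_def by (rule absmd) simp
  also have "\<dots> = exp (- (K * t)) * \<bar>I z1 t - I z2 t\<bar>"
  proof -
    have "\<bar>a * t - I z1 t - (a * t - I z2 t)\<bar> = \<bar>I z1 t - I z2 t\<bar>" by linarith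
    then show ?thesis by (rule arg_cong)
  qed
  also have "\<dots> \<le> exp (- (K * t)) * (H * L * dist z1 z2 / K * exp (K * t) / K)"
    using I_diff[OF assms] by (intro mult_left_mono) auto
  also have "\<dots> = H * L * dist z1 z2 / K ^ 2"
    using K0 by (simp add: exp_minus field_simps power2_eq_square)
  also have "\<dots> \<le> dist z1 z2 / 2"
  proof -
    have "H * L * dist z1 z2 * 2 \<le> K ^ 2 * dist z1 z2"
    proof -
      have "2 * H * L * dist z1 z2 \<le> K ^ 2 * dist z1 z2"
        using KL unfolding L_def[symmetric] by (intro mult_right_mono) auto
      then show ?thesis by (simp add: mult_ac)
    qed
    then show ?thesis using K0 by (simp add: field_simps)
  qed
  finally show ?thesis .
qed

lemma Phi_contr: "dist (Phi a z1) (Phi a z2) \<le> 1/2 * dist z1 z2"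
  by (rule dist_bound) (use E_diff cd_in in \<open>auto simp: Phi_apply dist_real_def\<close>)

lemma Phi_alpha: "dist (Phi a z) (Phi b z) \<le> d * \<bar>a - b\<bar>"
proof (rule dist_bound)
  fix s
  define t where "t = cd s"
  have t: "0 \<le> t" "t \<le> d" using cd_in t_def by auto
  have "E a z t - E b z t = (a - b) * (exp (- (K * t)) * t)"
    by (simp add: E_def algebra_simps)
  then have "\<bar>E a z t - E b z t\<bar> = exp (- (K * t)) * (\<bar>a - b\<bar> * t)"
    using t by (simp add: abs_mult)
  also have "\<dots> \<le> 1 * (\<bar>a - b\<bar> * d)"
    using t K0 by (intro mult_mono) (auto intro: mult_left_mono)
  finally show "dist (Phi a z s) (Phi b z s) \<le> d * \<bar>a - b\<bar>"
    by (simp add: Phi_apply dist_real_def t_def mult.commute)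
qed

definition zf where "zf a = (THE z. Phi a z = z)"

lemma zf_ex1: "\<exists>!z. Phi a z = z"
  by (rule banach_fix_type[of "1/2"]) (use Phi_contr in auto)

lemma zf_fix: "Phi a (zf a) = zf a"
  unfolding zf_def using zf_ex1 by (rule theI')

lemma zf_unique: "Phi a z = z \<Longrightarrow> z = zf a"
  using zf_ex1 zf_fix by blast

lemma zf_lip: "dist (zf a) (zf b) \<le> 2 * d * \<bar>a - b\<bar>"
proof -
  have "dist (zf a) (zf b) = dist (Phi a (zf a)) (Phi b (zf b))" by (simp add: zf_fix)
  also have "\<dots> \<le> dist (Phi a (zf a)) (Phi b (zf a)) + dist (Phi b (zf a)) (Phi b (zf b))"
    by (rule dist_triangle)
  also have "\<dots> \<le> d * \<bar>a - b\<bar> + 1/2 * dist (zf a) (zf b)"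
    by (intro add_mono Phi_alpha Phi_contr)
  finally show ?thesis by simp
qed

definition u where "u a t = a * t - I (zf a) t"
definition du where "du a t = a - G (zf a) t"

lemma ez_zf: "t \<in> {0..d} \<Longrightarrow> ez (zf a) t = u a t"
proof -
  assume t: "t \<in> {0..d}"
  have "apply_bcontfun (zf a) t = E a (zf a) t"
    by (metis Phi_apply cd_id t zf_fix)
  then show ?thesis by (simp add: ez_def E_def u_def exp_minus)
qed

lemma u_tsol: "tsol h p M d (u a) (du a)"
  unfolding tsol_def
proof safe
  fix t :: real assume t: "t \<in> {0..d}"
  show "(u a has_real_derivative du a t) (at t within {0..d})"
    unfolding u_def[abs_def] du_def using I_deriv[OF t]
    by (auto intro!: derivative_eq_intros)
  have "((\<lambda>t. du a t) has_real_derivative - g (zf a) t) (at t within {0..d})"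
    unfolding du_def using G_deriv[OF t]
    by (auto intro!: derivative_eq_intros)
  then show "(du a has_real_derivative - (h t * Ftr p M (u a t))) (at t within {0..d})"
    using ez_zf[OF t] by (simp add: g_def)
qed

lemma u0: "u a 0 = 0" "du a 0 = a"
  by (simp_all add: u_def du_def I_def G_def)

lemma u_lip:
  assumes "t \<in> {0..d}"
  shows "\<bar>u a t - u b t\<bar> \<le> exp (K * d) * (2 * d * \<bar>a - b\<bar>)"
proof -
  have "\<bar>u a t - u b t\<bar> = \<bar>exp (K * t) * zf a t - exp (K * t) * zf b t\<bar>"
    using ez_zf[OF assms, of a] ez_zf[OF assms, of b] by (simp add: ez_def)
  also have "\<dots> = exp (K * t) * \<bar>zf a t - zf b t\<bar>" by (rule absmd) simp
  also have "\<dots> \<le> exp (K * d) * (2 * d * \<bar>a - b\<bar>)"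
    using assms K0 dist_bounded[of "zf a" t "zf b"] zf_lip[of a b]
    by (intro mult_mono) (auto simp: dist_real_def)
  finally show ?thesis .
qed

lemma u_cont_alpha:
  assumes "t \<in> {0..d}"
  shows "continuous_on S (\<lambda>a. u a t)"
proof (rule lipschitz_on_continuous_on)
  show "(exp (K * d) * (2 * d))-lipschitz_on S (\<lambda>a. u a t)"
    using u_lip[OF assms] d0 by (intro lipschitz_onI) (auto simp: dist_real_def mult.assoc)
qed

end



context trunc begin

lemma tsolD:
  assumes "tsol h p M d v dv" "t \<in> {0..d}"
  shows "(v has_real_derivative dv t) (at t within {0..d})"
    "(dv has_real_derivative - (h t * Ftr p M (v t))) (at t within {0..d})"
  using assms unfolding tsol_def by auto

lemma uniq:
  assumes sol: "tsol h p M d v dv" and v0: "v 0 = 0" and dv0: "dv 0 = a"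
  shows "\<forall>t\<in>{0..d}. v t = u a t"
proof -
  note vd = tsolD(1)[OF sol] and dvd = tsolD(2)[OF sol]
  have vc: "continuous_on {0..d} v"
    using vd DERIV_continuous continuous_on_eq_continuous_within by blast
  have ec: "continuous_on {0..d} (\<lambda>s. exp (- (K * s)) * v s)" using vc by (intro continuous_intros)
  define zv where "zv = Bcontfun (\<lambda>s. exp (- (K * cd s)) * v (cd s))"
  have zv_ap: "apply_bcontfun zv s = exp (- (K * cd s)) * v (cd s)" for s
    unfolding zv_def using bc_comp[OF ec] by (simp add: Bcontfun_inverse)
  have ezv: "ez zv r = v r" if "r \<in> {0..d}" for r
    using that by (simp add: ez_def zv_ap cd_id exp_minus)
  have gzv: "g zv r = h r * Ftr p M (v r)" if "r \<in> {0..d}" for r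
    using ezv[OF that] by (simp add: g_def)
  have cvx: "convex {0..d::real}" by (rule convex_real_interval)
  obtain c1 where c1: "\<forall>x\<in>{0..d}. dv x + G zv x = c1"
  proof -
    have "\<exists>c. \<forall>x\<in>{0..d}. dv x + G zv x = c"
    proof (rule has_field_derivative_zero_constant[OF cvx])
      fix x :: real assume x: "x \<in> {0..d}"
      have "((\<lambda>x. dv x + G zv x) has_real_derivative (- (h x * Ftr p M (v x)) + g zv x)) (at x within {0..d})"
        by (intro DERIV_add dvd G_deriv x)
      then show "((\<lambda>x. dv x + G zv x) has_real_derivative 0) (at x within {0..d})"
        using gzv[OF x] by simp
    qed
    then show ?thesis using that by blast
  qed
  have G0: "G zv 0 = 0" by (simp add: G_def)
  have I0: "I zv 0 = 0" by (simp add: I_def)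
  have dveq: "dv x = a - G zv x" if "x \<in> {0..d}" for x
  proof -
    have "dv 0 + G zv 0 = c1" using c1 d0 by auto
    then have "c1 = a" using dv0 G0 by simp
    moreover have "dv x + G zv x = c1" using c1 that by blast
    ultimately show ?thesis by linarith
  qed
  obtain c2 where c2: "\<forall>x\<in>{0..d}. v x - (a * x - I zv x) = c2"
  proof -
    have "\<exists>c. \<forall>x\<in>{0..d}. v x - (a * x - I zv x) = c"
    proof (rule has_field_derivative_zero_constant[OF cvx])
      fix x :: real assume x: "x \<in> {0..d}"
      have "((\<lambda>x. v x - (a * x - I zv x)) has_real_derivative (dv x - (a - G zv x))) (at x within {0..d})"
        using vd[OF x] I_deriv[OF x] by (auto intro!: derivative_eq_intros)
      then show "((\<lambda>x. v x - (a * x - I zv x)) has_real_derivative 0) (at x within {0..d})"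
        using dveq[OF x] by simp
    qed
    then show ?thesis using that by blast
  qed
  have veq: "v x = a * x - I zv x" if "x \<in> {0..d}" for x
  proof -
    have "(0::real) \<in> {0..d}" using d0 by simp
    then have "v 0 - (a * 0 - I zv 0) = c2" using c2 by blast
    then have "c2 = 0" using v0 I0 by simp
    then show ?thesis using c2 that by auto
  qed
  have "Phi a zv = zv"
  proof (rule bcontfun_eqI)
    fix s
    show "apply_bcontfun (Phi a zv) s = apply_bcontfun zv s"
      using veq[OF cd_in[of s]] by (simp add: Phi_apply zv_ap E_def)
  qed
  then have "zv = zf a" by (rule zf_unique)
  show ?thesis
  proof
    fix t :: real assume t: "t \<in> {0..d}"
    have "v t = ez zv t" using ezv[OF t] by simp
    also have "\<dots> = u a t" using \<open>zv = zf a\<close> ez_zf[OF t] by simp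
    finally show "v t = u a t" .
  qed
qed

lemma uniq2:
  assumes "tsol h p M d v dv" "v 0 = 0" "tsol h p M d v' dv'" "v' 0 = 0" "dv 0 = dv' 0"
  shows "\<forall>t\<in>{0..d}. v t = v' t"
  using uniq[OF assms(1,2) refl] uniq[OF assms(3,4) refl] assms(5) by simp

lemma dv_mono:
  assumes sol: "tsol h p M d v dv" and "0 \<le> x" "x \<le> y" "y \<le> d"
  shows "dv y \<le> dv x"
proof -
  have "(\<lambda>t. - dv t) x \<le> (\<lambda>t. - dv t) y"
  proof (rule mono_within[of x y "{0..d}" _ "\<lambda>t. h t * Ftr p M (v t)"])
    fix t assume t: "t \<in> {x..y}"
    then have t': "t \<in> {0..d}" using assms by auto
    show "((\<lambda>t. - dv t) has_real_derivative h t * Ftr p M (v t)) (at t within {0..d})"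
      using DERIV_minus[OF tsolD(2)[OF sol t']] by simp
    show "0 \<le> h t * Ftr p M (v t)" using hb[OF t'] Ftr_nonneg[OF p1 M0] by simp
  qed (use assms in auto)
  then show ?thesis by simp
qed

lemma v_mono:
  assumes sol: "tsol h p M d v dv" and "0 \<le> x" "x \<le> y" "y \<le> d"
    and "\<And>t. t \<in> {x..y} \<Longrightarrow> 0 \<le> dv t"
  shows "v x \<le> v y"
  by (rule mono_within[of x y "{0..d}" v dv]) (use assms tsolD(1)[OF sol] in auto)

lemma v_anti:
  assumes sol: "tsol h p M d v dv" and "0 \<le> x" "x \<le> y" "y \<le> d"
    and "\<And>t. t \<in> {x..y} \<Longrightarrow> dv t \<le> 0"
  shows "v y \<le> v x"
proof -
  have "(\<lambda>t. - v t) x \<le> (\<lambda>t. - v t) y"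
  proof (rule mono_within[of x y "{0..d}" _ "\<lambda>t. - dv t"])
    fix t assume t: "t \<in> {x..y}"
    then have t': "t \<in> {0..d}" using assms by auto
    show "((\<lambda>t. - v t) has_real_derivative - dv t) (at t within {0..d})"
      using DERIV_minus[OF tsolD(1)[OF sol t']] by simp
    show "0 \<le> - dv t" using assms(5)[OF t] by simp
  qed (use assms in auto)
  then show ?thesis by simp
qed

lemma KLem:
  assumes sol: "tsol h p M d v dv" and v0: "v 0 = 0" and dv0: "0 < dv 0" and vd: "v d = 0"
    and s: "0 < s" "s < d"
  shows "0 < v s"
proof (rule ccontr)
  assume "\<not> 0 < v s"
  then have vs: "v s \<le> 0" by simp
  obtain t where t: "t \<in> {s<..<d}" "v d - v s = dv t * (d - s)"
    using mvt_within[of s d "{0..d}" v dv] s tsolD(1)[OF sol] by auto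
  have "0 \<le> dv t * (d - s)" using t vs vd by simp
  then have dvt: "0 \<le> dv t" using s by (simp add: zero_le_mult_iff)
  have le: "v r \<le> 0" if r: "r \<in> {0..s}" for r
  proof -
    have "v r \<le> v s"
    proof (rule v_mono[OF sol])
      fix q assume "q \<in> {r..s}"
      then have "dv t \<le> dv q" using dv_mono[OF sol, of q t] r t by auto
      then show "0 \<le> dv q" using dvt by simp
    qed (use r s in auto)
    then show ?thesis using vs by simp
  qed
  obtain \<delta> where \<delta>: "\<delta> > 0" "\<And>e. e > 0 \<Longrightarrow> 0 + e \<in> {0..d} \<Longrightarrow> e < \<delta> \<Longrightarrow> v 0 < v (0 + e)"
    using has_real_derivative_pos_inc_right[OF tsolD(1)[OF sol] dv0] d0 by auto
  define e where "e = min (\<delta> / 2) s"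
  have "0 < e" "e \<in> {0..d}" "e < \<delta>" "e \<in> {0..s}" using \<delta> s by (auto simp: e_def)
  then have "0 < v e" using \<delta>(2)[of e] v0 by simp
  moreover have "v e \<le> 0" using le \<open>e \<in> {0..s}\<close> by blast
  ultimately show False by simp
qed

lemma after_zero:
  assumes sol: "tsol h p M d v dv" and v0: "v 0 = 0" and s: "0 < s0" "s0 < d" and vs: "v s0 \<le> 0"
  shows "v d \<le> 0"
proof -
  obtain \<xi> where xi: "\<xi> \<in> {0<..<s0}" "v s0 - v 0 = dv \<xi> * (s0 - 0)"
    using mvt_within[of 0 s0 "{0..d}" v dv] s tsolD(1)[OF sol] by auto
  have "dv \<xi> * s0 \<le> 0" using xi vs v0 by simp
  then have dxi: "dv \<xi> \<le> 0" using s by (simp add: mult_le_0_iff)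
  have "v d \<le> v s0"
  proof (rule v_anti[OF sol])
    fix q assume "q \<in> {s0..d}"
    then have "dv q \<le> dv \<xi>" using dv_mono[OF sol, of \<xi> q] xi by auto
    then show "dv q \<le> 0" using dxi by simp
  qed (use s in auto)
  then show ?thesis using vs by simp
qed

lemma upper:
  assumes sol: "tsol h p M d v dv" and v0: "v 0 = 0" and t: "t \<in> {0..d}"
  shows "v t \<le> dv 0 * t"
proof -
  have "(\<lambda>t. dv 0 * t - v t) 0 \<le> (\<lambda>t. dv 0 * t - v t) t"
  proof (rule mono_within[of 0 t "{0..d}" _ "\<lambda>t. dv 0 - dv t"])
    fix q assume q: "q \<in> {0..t}"
    then have q': "q \<in> {0..d}" using t by auto
    show "((\<lambda>t. dv 0 * t - v t) has_real_derivative dv 0 - dv q) (at q within {0..d})"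
      using tsolD(1)[OF sol q'] by (auto intro!: derivative_eq_intros)
    show "0 \<le> dv 0 - dv q" using dv_mono[OF sol, of 0 q] q' by auto
  qed (use t in auto)
  then show ?thesis using v0 by simp
qed

end



lemma ode_to_tsol:
  assumes "ode_sol h p {0..} v dv" "\<And>t. t \<in> {0..d} \<Longrightarrow> 0 \<le> v t \<and> v t \<le> M"
  shows "tsol h p M d v dv"
  unfolding tsol_def
proof safe
  fix t :: real assume t: "t \<in> {0..d}"
  have sub: "{0..d} \<subseteq> {0::real..}" by auto
  have t': "t \<in> {0..}" using t by simp
  have d1: "(v has_real_derivative dv t) (at t within {0..})"
    and d2: "(dv has_real_derivative - nl h p t (v t)) (at t within {0..})"
    using assms(1) t' unfolding ode_sol_def by auto
  show "(v has_real_derivative dv t) (at t within {0..d})" using DERIV_subset[OF d1 sub] .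
  have "nl h p t (v t) = h t * Ftr p M (v t)"
    using assms(2)[OF t] by (simp add: nl_pw Ftr_eq)
  then show "(dv has_real_derivative - (h t * Ftr p M (v t))) (at t within {0..d})"
    using DERIV_subset[OF d2 sub] by simp
qed

lemma tsol_to_ode:
  assumes "tsol h p M d v dv" "\<And>t. t \<in> {0..d} \<Longrightarrow> 0 \<le> v t \<and> v t \<le> M"
  shows "ode_sol h p {0..d} v dv"
  unfolding ode_sol_def
proof safe
  fix t :: real assume t: "t \<in> {0..d}"
  have d1: "(v has_real_derivative dv t) (at t within {0..d})"
    and d2: "(dv has_real_derivative - (h t * Ftr p M (v t))) (at t within {0..d})"
    using assms(1) t unfolding tsol_def by auto
  show "(v has_real_derivative dv t) (at t within {0..d})" by (rule d1)
  have "nl h p t (v t) = h t * Ftr p M (v t)"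
    using assms(2)[OF t] by (simp add: nl_pw Ftr_eq)
  then show "(dv has_real_derivative - nl h p t (v t)) (at t within {0..d})"
    using d2 by simp
qed

lemma tsol_sub:
  assumes "tsol h p M d v dv" "e \<le> d"
  shows "tsol h p M e v dv"
  unfolding tsol_def
proof safe
  fix t :: real assume t: "t \<in> {0..e}"
  have sub: "{0..e} \<subseteq> {0..d}" using assms by auto
  then have t': "t \<in> {0..d}" using t by auto
  have d1: "(v has_real_derivative dv t) (at t within {0..d})"
    and d2: "(dv has_real_derivative - (h t * Ftr p M (v t))) (at t within {0..d})"
    using assms(1) t' unfolding tsol_def by auto
  show "(v has_real_derivative dv t) (at t within {0..e})" by (rule DERIV_subset[OF d1 sub])
  show "(dv has_real_derivative - (h t * Ftr p M (v t))) (at t within {0..e})"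
    by (rule DERIV_subset[OF d2 sub])
qed

lemma ode_cont:
  assumes "ode_sol h p {0..} v dv"
  shows "continuous_on {0..} v"
  using assms unfolding ode_sol_def
  using DERIV_continuous continuous_on_eq_continuous_within by blast

lemma h0_nonneg:
  fixes h :: "real \<Rightarrow> real"
  assumes "continuous_on {0..} h" "\<And>s. s > 0 \<Longrightarrow> h s > (0::real)"
  shows "0 \<le> h 0"
proof (rule ccontr)
  assume "\<not> 0 \<le> h 0"
  then have neg: "- h 0 > 0" by simp
  from assms(1) obtain \<delta> where \<delta>: "\<delta> > 0" "\<forall>x'\<in>{0..}. dist x' 0 < \<delta> \<longrightarrow> dist (h x') (h 0) < - h 0"
    unfolding continuous_on_iff using neg by (metis atLeast_iff order_refl)
  have "dist (h (\<delta>/2)) (h 0) < - h 0" using \<delta> by (auto simp: dist_real_def)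
  moreover have "h (\<delta>/2) > 0" using assms(2) \<delta> by simp
  ultimately show False by (simp add: dist_real_def)
qed



theorem lemma2p8:
  fixes h :: "real \<Rightarrow> real" and p s0 :: real
    and wl dwl wu dwu w dw :: "real \<Rightarrow> real"
  assumes "p > 1"
    and "continuous_on {0..} h"
    and "\<And>s. s > 0 \<Longrightarrow> h s > 0"
    and "ode_sol h p {0..} wl dwl" and "ode_sol h p {0..} wu dwu"
    and "wl 0 = 0" and "wu 0 = 0"
    and "0 < dwl 0" and "dwl 0 < dwu 0"
    and "\<And>s. s > 0 \<Longrightarrow> wl s > 0" and "\<And>s. s > 0 \<Longrightarrow> wu s > 0"
    and "ode_sol h p {0..} w dw"
    and "w 0 = 0" and "dwl 0 < dw 0" and "dw 0 < dwu 0"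
    and "s0 > 0" and "\<And>s. 0 < s \<Longrightarrow> s < s0 \<Longrightarrow> w s > 0" and "w s0 = 0"
  shows "\<exists>C>0. \<forall>c\<ge>C. \<exists>w1 dw1 w2 dw2.
           ode_sol h p {0..c} w1 dw1 \<and> w1 0 = 0 \<and> w1 c = 0 \<and> (\<forall>s. 0 < s \<and> s < c \<longrightarrow> w1 s > 0) \<and>
           ode_sol h p {0..c} w2 dw2 \<and> w2 0 = 0 \<and> w2 c = 0 \<and> (\<forall>s. 0 < s \<and> s < c \<longrightarrow> w2 s > 0) \<and>
           dwl 0 < dw1 0 \<and> dw1 0 < dw 0 \<and> dw 0 < dw2 0 \<and> dw2 0 < dwu 0"
proof (intro exI[of _ "s0 + 1"] conjI allI impI)
  note p1 = assms(1) and hcont = assms(2) and hpos = assms(3)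
  show "0 < s0 + 1" using assms(16) by simp
  fix c assume c: "s0 + 1 \<le> c"
  define al where "al = dwl 0"
  define au where "au = dwu 0"
  define aw where "aw = dw 0"
  have c0: "0 < c" and s0c: "s0 < c" using c assms(16) by auto
  have hnn: "0 \<le> h s" if "s \<in> {0..c}" for s
    using that h0_nonneg[OF hcont hpos] hpos by (cases "s = 0") (auto simp: less_le)
  have hc: "continuous_on {0..c} h" by (rule continuous_on_subset[OF hcont]) auto
  have "bounded (h ` {0..c})" by (intro compact_imp_bounded compact_continuous_image hc) simp
  then obtain H1 where H1: "\<forall>x\<in>{0..c}. norm (h x) \<le> H1" unfolding bounded_iff by auto
  define H where "H = max H1 1"
  have H0: "0 < H" by (simp add: H_def)
  have hH: "h s \<le> H" if "s \<in> {0..c}" for s using H1 that by (force simp: H_def)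
  have wc: "continuous_on {0..c} (\<lambda>s. \<bar>wl s\<bar> + \<bar>wu s\<bar> + \<bar>w s\<bar>)"
    using continuous_on_subset[OF ode_cont[OF assms(4)], of "{0..c}"]
      continuous_on_subset[OF ode_cont[OF assms(5)], of "{0..c}"]
      continuous_on_subset[OF ode_cont[OF assms(12)], of "{0..c}"]
    by (intro continuous_intros) auto
  have "bounded ((\<lambda>s. \<bar>wl s\<bar> + \<bar>wu s\<bar> + \<bar>w s\<bar>) ` {0..c})"
    by (intro compact_imp_bounded compact_continuous_image wc) simp
  then obtain B1 where B1: "\<forall>x\<in>{0..c}. norm (\<bar>wl x\<bar> + \<bar>wu x\<bar> + \<bar>w x\<bar>) \<le> B1"
    unfolding bounded_iff by auto
  define M where "M = au * c + max B1 0 + 1"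
  have au0: "0 < au" using assms(8,9) by (simp add: au_def)
  have M0: "0 < M" using au0 c0 by (simp add: M_def add_pos_nonneg)
  have wM: "\<bar>wl s\<bar> \<le> M \<and> \<bar>wu s\<bar> \<le> M \<and> \<bar>w s\<bar> \<le> M" if "s \<in> {0..c}" for s
  proof -
    have "\<bar>wl s\<bar> + \<bar>wu s\<bar> + \<bar>w s\<bar> \<le> B1" using B1 that by force
    moreover have "0 \<le> au * c" using au0 c0 by simp
    moreover have "B1 \<le> max B1 0" by simp
    ultimately show ?thesis unfolding M_def
      using abs_ge_zero[of "wl s"] abs_ge_zero[of "wu s"] abs_ge_zero[of "w s"] by linarith
  qed
  have auM: "au * c \<le> M" by (simp add: M_def)
  define L where "L = p * M powr (p - 1)"
  have L0: "0 \<le> L" using p1 by (simp add: L_def)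
  define K where "K = sqrt (2 * H * L) + 1"
  have sq: "0 \<le> sqrt (2 * H * L)" by (rule real_sqrt_ge_zero) (use H0 L0 in simp)
  have K0: "0 < K" unfolding K_def using sq by linarith
  have KL: "2 * H * (p * M powr (p - 1)) \<le> K ^ 2"
  proof -
    have x0: "0 \<le> 2 * H * L" using H0 L0 by simp
    have "K ^ 2 = (sqrt (2 * H * L)) ^ 2 + 2 * sqrt (2 * H * L) + 1"
      by (simp add: K_def power2_eq_square algebra_simps)
    also have "\<dots> = 2 * H * L + 2 * sqrt (2 * H * L) + 1" using x0 by simp
    finally show ?thesis unfolding L_def[symmetric] using sq by linarith
  qed
  interpret T: trunc h p M c H K
    by (unfold_locales) (use p1 M0 c0 H0 K0 hc hnn hH KL in auto)
  interpret T0: trunc h p M s0 H K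
    by (unfold_locales) (use p1 M0 assms(16) H0 K0 s0c KL in
        \<open>auto intro: continuous_on_subset[OF hc] hnn hH\<close>)
  have tl: "tsol h p M c wl dwl"
  proof (rule ode_to_tsol[OF assms(4)])
    fix t :: real assume t: "t \<in> {0..c}"
    show "0 \<le> wl t \<and> wl t \<le> M" using wM[OF t] assms(6) assms(10)[of t] t
      by (cases "t = 0") auto
  qed
  have ul: "T.u al c > 0"
  proof -
    have "c \<in> {0..c}" using c0 by simp
    then have "wl c = T.u al c" using T.uniq[OF tl assms(6) refl] by (simp add: al_def)
    then show ?thesis using assms(10)[OF c0] by simp
  qed
  have tu: "tsol h p M c wu dwu"
  proof (rule ode_to_tsol[OF assms(5)])
    fix t :: real assume t: "t \<in> {0..c}"
    show "0 \<le> wu t \<and> wu t \<le> M" using wM[OF t] assms(7) assms(11)[of t] t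
      by (cases "t = 0") auto
  qed
  have uu: "T.u au c > 0"
  proof -
    have "c \<in> {0..c}" using c0 by simp
    then have "wu c = T.u au c" using T.uniq[OF tu assms(7) refl] by (simp add: au_def)
    then show ?thesis using assms(11)[OF c0] by simp
  qed
  have tw: "tsol h p M s0 w dw"
  proof (rule ode_to_tsol[OF assms(12)])
    fix t :: real assume t: "t \<in> {0..s0}"
    then have t': "t \<in> {0..c}" using s0c by auto
    show "0 \<le> w t \<and> w t \<le> M" using wM[OF t'] assms(13) assms(17)[of t] assms(18) t
      by (cases "t = 0"; cases "t = s0") auto
  qed
  have tuw: "tsol h p M s0 (T.u aw) (T.du aw)"
    by (rule tsol_sub[OF T.u_tsol]) (use s0c in simp)
  have uws0: "T.u aw s0 = 0"
  proof -
    have "s0 \<in> {0..s0}" using assms(16) by simp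
    then have "T.u aw s0 = w s0" using T0.uniq2[OF tuw T.u0(1) tw assms(13)] T.u0(2)
      by (simp add: aw_def)
    then show ?thesis using assms(18) by simp
  qed
  have uwc: "T.u aw c \<le> 0"
    by (rule T.after_zero[OF T.u_tsol T.u0(1) assms(16) s0c]) (simp add: uws0)
  have cont: "continuous_on S (\<lambda>a. T.u a c)" for S
    by (rule T.u_cont_alpha) (use c0 in simp)
  have good: "0 < T.u a s" if "0 < a" "T.u a c = 0" "0 < s" "s < c" for a s
    by (rule T.KLem[OF T.u_tsol T.u0(1) _ that(2) that(3,4)]) (simp add: T.u0(2) that(1))
  have aw_bad: "T.u aw c \<noteq> 0"
  proof
    assume "T.u aw c = 0"
    then have "0 < T.u aw s0" using good[of aw s0] assms(14,8,16) s0c by (simp add: aw_def)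
    then show False using uws0 by simp
  qed
  have sol_ok: "ode_sol h p {0..c} (T.u a) (T.du a) \<and> T.u a 0 = 0 \<and> T.u a c = 0 \<and>
      (\<forall>s. 0 < s \<and> s < c \<longrightarrow> T.u a s > 0) \<and> T.du a 0 = a"
    if a: "0 < a" "a \<le> au" "T.u a c = 0" for a
  proof -
    have pos: "\<forall>s. 0 < s \<and> s < c \<longrightarrow> T.u a s > 0" using good[OF a(1,3)] by blast
    have rng: "0 \<le> T.u a t \<and> T.u a t \<le> M" if t: "t \<in> {0..c}" for t
    proof
      show "0 \<le> T.u a t" using pos t a(3) T.u0(1)[of a]
        by (cases "t = 0"; cases "t = c") (auto simp: less_le)
      have "T.u a t \<le> T.du a 0 * t" by (rule T.upper[OF T.u_tsol T.u0(1) t])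
      also have "\<dots> = a * t" by (simp add: T.u0(2))
      also have "\<dots> \<le> au * c" using a t by (intro mult_mono) auto
      finally show "T.u a t \<le> M" using auM by simp
    qed
    show ?thesis using tsol_to_ode[OF T.u_tsol rng] pos a(3) T.u0 by blast
  qed
  obtain a1 where a1: "al \<le> a1" "a1 \<le> aw" "T.u a1 c = 0"
    using IVT2'[of "\<lambda>a. T.u a c" aw 0 al, OF uwc less_imp_le[OF ul] _ cont] assms(14)
    by (auto simp: al_def aw_def)
  obtain a2 where a2: "aw \<le> a2" "a2 \<le> au" "T.u a2 c = 0"
    using IVT'[of "\<lambda>a. T.u a c" aw 0 au, OF uwc less_imp_le[OF uu] _ cont] assms(15)
    by (auto simp: au_def aw_def)
  have a1ne: "a1 \<noteq> al" "a1 \<noteq> aw" using a1 ul aw_bad by auto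
  have a2ne: "a2 \<noteq> au" "a2 \<noteq> aw" using a2 uu aw_bad by auto
  have a1p: "0 < a1" "a1 \<le> au" using a1 assms(8,15) by (auto simp: al_def aw_def au_def)
  have a2p: "0 < a2" "a2 \<le> au" using a2 assms(8,14) by (auto simp: al_def aw_def au_def)
  note s1 = sol_ok[OF a1p a1(3)] and s2 = sol_ok[OF a2p a2(3)]
  show "\<exists>w1 dw1 w2 dw2.
           ode_sol h p {0..c} w1 dw1 \<and> w1 0 = 0 \<and> w1 c = 0 \<and> (\<forall>s. 0 < s \<and> s < c \<longrightarrow> w1 s > 0) \<and>
           ode_sol h p {0..c} w2 dw2 \<and> w2 0 = 0 \<and> w2 c = 0 \<and> (\<forall>s. 0 < s \<and> s < c \<longrightarrow> w2 s > 0) \<and>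
           dwl 0 < dw1 0 \<and> dw1 0 < dw 0 \<and> dw 0 < dw2 0 \<and> dw2 0 < dwu 0"
  proof (intro exI conjI)
    show "ode_sol h p {0..c} (T.u a1) (T.du a1)" using s1 by blast
    show "T.u a1 0 = 0" "T.u a1 c = 0" using s1 by blast+
    show "\<forall>s. 0 < s \<and> s < c \<longrightarrow> T.u a1 s > 0" using s1 by blast
    show "ode_sol h p {0..c} (T.u a2) (T.du a2)" using s2 by blast
    show "T.u a2 0 = 0" "T.u a2 c = 0" using s2 by blast+
    show "\<forall>s. 0 < s \<and> s < c \<longrightarrow> T.u a2 s > 0" using s2 by blast
    show "dwl 0 < T.du a1 0" "T.du a1 0 < dw 0" "dw 0 < T.du a2 0" "T.du a2 0 < dwu 0"
      using s1 s2 a1 a2 a1ne a2ne by (auto simp: al_def aw_def au_def)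
  qed
qed


end
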